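(* Let $\Gamma=(V,E)$ be a reflexive locally finite $k$-separable graph and let $X$ and $Y$ be $k$-fragments of $\Gamma$. Then $\partial^-(\nabla(X))=\partial(X)$, $\nabla^-(\nabla(X))=X$, and $X\subseteq Y$ if and only if $\nabla(Y)\subseteq\nabla(X)$. In particular, $\nabla(X)$ is a reverse-$k$-semi-fragment of $\Gamma$.
   Context: A graph is a pair $\Gamma=(V,E)$ with $E\subseteq V\times V$. For $x\in V$, $\Gamma(x)=\{y:(x,y)\in E\}$, and $\Gamma(X)=\bigcup_{x\in X}\Gamma(x)$. The reverse graph is $\Gamma^-=(V,E^-)$ with $E^-=\{(x,y):(y,x)\in E\}$. $\Gamma$ is reflexive if $(x,x)\in E$ for all $x$, locally finite if $\Gamma(x),\Gamma^-(x)$ are finite for all $x$. $\partial(X)=\Gamma(X)\setminus X$, $\nabla(X)=V\setminus\Gamma(X)$, and $\partial^-,\nabla^-$ are the same operators for $\Gamma^-$. $\Gamma$ is $k$-separable if there is a finite $X$ with $|X|\ge k$ and $|\nabla(X)|\ge k$; then $\kappa_k(\Gamma)=\min\{|\partial(X)|: X\text{ finite}, |X|\ge k, |\nabla(X)|\ge k\}$. A $k$-fragment is a finite $X$ with $|X|\ge k$, $|\nabla(X)|\ge k$, $|\partial(X)|=\kappa_k(\Gamma)$. A reverse $k$-fragment is a $k$-fragment of $\Gamma^-$. A $k$-semi-fragment of $\Gamma$ is a set $X$ that is either a $k$-fragment of $\Gamma$ or such that $\nabla(X)$ is a $k$-fragment of $\Gamma^-$; a reverse-$k$-semi-fragment of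 $\Gamma$ is a $k$-semi-fragment of $\Gamma^-$. *)

theory Defs
  imports Main
begin

text \<open>A graph is a pair (V, E) with E a subset of V \<times> V.  All operators are taken
relative to the vertex set V.  The reverse graph is (V, converse E).\<close>

definition graph :: "'a set \<Rightarrow> ('a \<times> 'a) set \<Rightarrow> bool" where
  "graph V E \<longleftrightarrow> E \<subseteq> V \<times> V"

definition nbr :: "('a \<times> 'a) set \<Rightarrow> 'a \<Rightarrow> 'a set" where
  "nbr E x = {y. (x, y) \<in> E}"

definition Nbr :: "('a \<times> 'a) set \<Rightarrow> 'a set \<Rightarrow> 'a set" where
  "Nbr E X = (\<Union>x\<in>X. nbr E x)"

definition bdry :: "('a \<times> 'a) set \<Rightarrow> 'a set \<Rightarrow> 'a set" where
  "bdry E X = Nbr E X - X"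

definition nabla :: "'a set \<Rightarrow> ('a \<times> 'a) set \<Rightarrow> 'a set \<Rightarrow> 'a set" where
  "nabla V E X = V - Nbr E X"

definition reflexive_graph :: "'a set \<Rightarrow> ('a \<times> 'a) set \<Rightarrow> bool" where
  "reflexive_graph V E \<longleftrightarrow> (\<forall>x\<in>V. (x, x) \<in> E)"

definition locally_finite :: "'a set \<Rightarrow> ('a \<times> 'a) set \<Rightarrow> bool" where
  "locally_finite V E \<longleftrightarrow> (\<forall>x\<in>V. finite (nbr E x) \<and> finite (nbr (converse E) x))"

text \<open>|A| \<ge> k, where an infinite set has cardinality \<ge> every k.\<close>
definition card_ge :: "'a set \<Rightarrow> nat \<Rightarrow> bool" where
  "card_ge A k \<longleftrightarrow> infinite A \<or> k \<le> card A"

definition admissible :: "'a set \<Rightarrow> ('a \<times> 'a) set \<Rightarrow> nat \<Rightarrow> 'a set \<Rightarrow> bool" where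
  "admissible V E k X \<longleftrightarrow> X \<subseteq> V \<and> finite X \<and> k \<le> card X \<and> card_ge (nabla V E X) k"

definition k_separable :: "'a set \<Rightarrow> ('a \<times> 'a) set \<Rightarrow> nat \<Rightarrow> bool" where
  "k_separable V E k \<longleftrightarrow> (\<exists>X. admissible V E k X)"

definition kappa :: "'a set \<Rightarrow> ('a \<times> 'a) set \<Rightarrow> nat \<Rightarrow> nat" where
  "kappa V E k = (LEAST n. \<exists>X. admissible V E k X \<and> n = card (bdry E X))"

definition fragment :: "'a set \<Rightarrow> ('a \<times> 'a) set \<Rightarrow> nat \<Rightarrow> 'a set \<Rightarrow> bool" where
  "fragment V E k X \<longleftrightarrow> admissible V E k X \<and> card (bdry E X) = kappa V E k"

definition semi_fragment :: "'a set \<Rightarrow> ('a \<times> 'a) set \<Rightarrow> nat \<Rightarrow> 'a set \<Rightarrow> bool" where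
  "semi_fragment V E k X \<longleftrightarrow> fragment V E k X \<or> fragment V (converse E) k (nabla V E X)"

definition rev_semi_fragment :: "'a set \<Rightarrow> ('a \<times> 'a) set \<Rightarrow> nat \<Rightarrow> 'a set \<Rightarrow> bool" where
  "rev_semi_fragment V E k X \<longleftrightarrow> semi_fragment V (converse E) k X"

end

theory Submission
  imports Defs
begin

lemma helper:
  fixes V :: "'a set" and E :: "('a \<times> 'a) set" and k :: nat and X :: "'a set"
  assumes "graph V E"
    and "reflexive_graph V E"
    and "locally_finite V E"
    and "k_separable V E k"
    and "fragment V E k X"
  shows "bdry (converse E) (nabla V E X) = bdry E X
       \<and> nabla V (converse E) (nabla V E X) = X"
proof -
  have EV: "E \<subseteq> V \<times> V" using assms(1) by (simp add: graph_def)
  have rf: "\<And>x. x \<in> V \<Longrightarrow> (x,x) \<in> E" using assms(2) by (simp add: reflexive_graph_def)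
  have XV: "X \<subseteq> V" and Xf: "finite X" and Xk: "k \<le> card X"
    and Xn: "card_ge (nabla V E X) k" and Xc: "card (bdry E X) = kappa V E k"
    using assms(5) by (auto simp: fragment_def admissible_def)
  have NXfin: "finite (Nbr E X)"
    using assms(3) XV Xf unfolding locally_finite_def Nbr_def by auto
  have key: "\<exists>z. (y,z) \<in> E \<and> z \<in> nabla V E X" if y: "y \<in> bdry E X" for y
  proof (rule ccontr)
    assume H: "\<not> (\<exists>z. (y,z) \<in> E \<and> z \<in> nabla V E X)"
    have yV: "y \<in> V" using y EV by (auto simp: bdry_def Nbr_def nbr_def)
    have yX: "y \<notin> X" using y by (auto simp: bdry_def)
    have sub: "nbr E y \<subseteq> Nbr E X" using H EV by (auto simp: nabla_def nbr_def)
    let ?X' = "insert y X"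
    have N': "Nbr E ?X' = Nbr E X" using sub by (auto simp: Nbr_def)
    have b': "bdry E ?X' = bdry E X - {y}" using N' by (auto simp: bdry_def)
    have bf: "finite (bdry E X)" using NXfin by (simp add: bdry_def)
    have lt: "card (bdry E ?X') < card (bdry E X)"
      using b' bf y by (metis card_Diff1_less)
    have adm: "admissible V E k ?X'"
      unfolding admissible_def using XV yV Xf Xk yX Xn N'
      by (auto simp: nabla_def)
    have "kappa V E k \<le> card (bdry E ?X')"
      unfolding kappa_def by (rule Least_le) (use adm in blast)
    with lt Xc show False by simp
  qed
  have B: "bdry (converse E) (nabla V E X) = bdry E X"
  proof
    show "bdry (converse E) (nabla V E X) \<subseteq> bdry E X"
    proof
      fix y assume "y \<in> bdry (converse E) (nabla V E X)"
      then obtain z where z: "z \<in> nabla V E X" "(y,z) \<in> E" "y \<notin> nabla V E X"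
        by (auto simp: bdry_def Nbr_def nbr_def)
      have "y \<in> V" using z EV by auto
      moreover have "y \<notin> X" using z by (auto simp: nabla_def Nbr_def nbr_def)
      ultimately show "y \<in> bdry E X" using z(3) by (auto simp: bdry_def nabla_def)
    qed
  next
    show "bdry E X \<subseteq> bdry (converse E) (nabla V E X)"
    proof
      fix y assume y: "y \<in> bdry E X"
      then obtain z where "(y,z) \<in> E" "z \<in> nabla V E X" using key by blast
      moreover have "y \<notin> nabla V E X" using y by (auto simp: bdry_def nabla_def)
      ultimately show "y \<in> bdry (converse E) (nabla V E X)"
        by (auto simp: bdry_def Nbr_def nbr_def)
    qed
  qed
  have N2: "nabla V (converse E) (nabla V E X) = X"
  proof -
    have "Nbr (converse E) (nabla V E X) = nabla V E X \<union> bdry E X"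
    proof
      show "Nbr (converse E) (nabla V E X) \<subseteq> nabla V E X \<union> bdry E X"
        using B by (auto simp: bdry_def)
      show "nabla V E X \<union> bdry E X \<subseteq> Nbr (converse E) (nabla V E X)"
        using B rf by (auto simp: bdry_def nabla_def Nbr_def nbr_def)
    qed
    moreover have "X \<subseteq> Nbr E X" using XV rf by (auto simp: Nbr_def nbr_def)
    moreover have "Nbr E X \<subseteq> V" using EV by (auto simp: Nbr_def nbr_def)
    ultimately show ?thesis using XV by (auto simp: nabla_def bdry_def)
  qed
  show ?thesis using B N2 by blast
qed

theorem lemma3p2:
  fixes V :: "'a set" and E :: "('a \<times> 'a) set" and k :: nat and X Y :: "'a set"
  assumes "graph V E"
    and "reflexive_graph V E"
    and "locally_finite V E"
    and "k_separable V E k"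
    and "fragment V E k X"
    and "fragment V E k Y"
  shows "bdry (converse E) (nabla V E X) = bdry E X
       \<and> nabla V (converse E) (nabla V E X) = X
       \<and> (X \<subseteq> Y \<longleftrightarrow> nabla V E Y \<subseteq> nabla V E X)
       \<and> rev_semi_fragment V E k (nabla V E X)"
proof -
  have EV: "E \<subseteq> V \<times> V" using assms(1) by (simp add: graph_def)
  have rf: "\<And>x. x \<in> V \<Longrightarrow> (x,x) \<in> E" using assms(2) by (simp add: reflexive_graph_def)
  have XV: "X \<subseteq> V" and Xf: "finite X" and Xk: "k \<le> card X"
    and Xn: "card_ge (nabla V E X) k" and Xc: "card (bdry E X) = kappa V E k"
    using assms(5) by (auto simp: fragment_def admissible_def)
  have YV: "Y \<subseteq> V" using assms(6) by (auto simp: fragment_def admissible_def)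
  have NXfin: "finite (Nbr E X)"
    using assms(3) XV Xf unfolding locally_finite_def Nbr_def by auto
  have key: "\<exists>z. (y,z) \<in> E \<and> z \<in> nabla V E X" if y: "y \<in> bdry E X" for y
  proof (rule ccontr)
    assume H: "\<not> (\<exists>z. (y,z) \<in> E \<and> z \<in> nabla V E X)"
    have yV: "y \<in> V" using y EV by (auto simp: bdry_def Nbr_def nbr_def)
    have yX: "y \<notin> X" using y by (auto simp: bdry_def)
    have sub: "nbr E y \<subseteq> Nbr E X" using H EV by (auto simp: nabla_def nbr_def)
    let ?X' = "insert y X"
    have N': "Nbr E ?X' = Nbr E X" using sub by (auto simp: Nbr_def)
    have b': "bdry E ?X' = bdry E X - {y}" using N' by (auto simp: bdry_def)
    have bf: "finite (bdry E X)" using NXfin by (simp add: bdry_def)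
    have lt: "card (bdry E ?X') < card (bdry E X)"
      using b' bf y by (metis card_Diff1_less)
    have adm: "admissible V E k ?X'"
      unfolding admissible_def using XV yV Xf Xk yX Xn N'
      by (auto simp: nabla_def)
    have "kappa V E k \<le> card (bdry E ?X')"
      unfolding kappa_def by (rule Least_le) (use adm in blast)
    with lt Xc show False by simp
  qed
  have B: "bdry (converse E) (nabla V E X) = bdry E X"
  proof
    show "bdry (converse E) (nabla V E X) \<subseteq> bdry E X"
    proof
      fix y assume "y \<in> bdry (converse E) (nabla V E X)"
      then obtain z where z: "z \<in> nabla V E X" "(y,z) \<in> E" "y \<notin> nabla V E X"
        by (auto simp: bdry_def Nbr_def nbr_def)
      have "y \<in> V" using z EV by auto
      moreover have "y \<notin> X" using z by (auto simp: nabla_def Nbr_def nbr_def)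
      ultimately show "y \<in> bdry E X" using z(3) by (auto simp: bdry_def nabla_def)
    qed
  next
    show "bdry E X \<subseteq> bdry (converse E) (nabla V E X)"
    proof
      fix y assume y: "y \<in> bdry E X"
      then obtain z where "(y,z) \<in> E" "z \<in> nabla V E X" using key by blast
      moreover have "y \<notin> nabla V E X" using y by (auto simp: bdry_def nabla_def)
      ultimately show "y \<in> bdry (converse E) (nabla V E X)"
        by (auto simp: bdry_def Nbr_def nbr_def)
    qed
  qed
  have N2: "nabla V (converse E) (nabla V E X) = X"
  proof -
    have "Nbr (converse E) (nabla V E X) = nabla V E X \<union> bdry E X"
    proof
      show "Nbr (converse E) (nabla V E X) \<subseteq> nabla V E X \<union> bdry E X"
        using B by (auto simp: bdry_def)
      show "nabla V E X \<union> bdry E X \<subseteq> Nbr (converse E) (nabla V E X)"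
        using B rf by (auto simp: bdry_def nabla_def Nbr_def nbr_def)
    qed
    moreover have "X \<subseteq> Nbr E X" using XV rf by (auto simp: Nbr_def nbr_def)
    moreover have "Nbr E X \<subseteq> V" using EV by (auto simp: Nbr_def nbr_def)
    ultimately show ?thesis using XV by (auto simp: nabla_def bdry_def)
  qed
  have C: "X \<subseteq> Y \<longleftrightarrow> nabla V E Y \<subseteq> nabla V E X"
  proof
    assume "X \<subseteq> Y" thus "nabla V E Y \<subseteq> nabla V E X"
      by (auto simp: nabla_def Nbr_def)
  next
    assume h: "nabla V E Y \<subseteq> nabla V E X"
    have "nabla V (converse E) (nabla V E X) \<subseteq> nabla V (converse E) (nabla V E Y)"
      using h by (auto simp: nabla_def Nbr_def)
    moreover have "nabla V (converse E) (nabla V E Y) \<subseteq> Y"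
      using helper[OF assms(1-4) assms(6)] by simp
    ultimately show "X \<subseteq> Y" using N2 by simp
  qed
  have D: "rev_semi_fragment V E k (nabla V E X)"
    unfolding rev_semi_fragment_def semi_fragment_def using N2 assms(5) by simp
  show ?thesis using B N2 C D by blast
qed

end
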